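(* Let $\mathcal{A}$ be the augmented free tridendriform algebra on reduced planar trees, and let $\Delta:\mathcal{A}\to\mathcal{A}\otimes\mathcal{A}$ be the map such that $\Delta(|)=|\otimes|$ and whose restriction to $\mathcal{A}^+$ is the unique tridendriform algebra morphism $\mathcal{A}^+\to\mathcal{A}\overline{\otimes}\mathcal{A}$ with $\Delta(Y)=Y\otimes|+|\otimes Y$. For $x\in\mathcal A^+$ put $\tilde\Delta(x)=\Delta(x)-|\otimes x-x\otimes|$. Then for all $t,s\in\mathcal{A}^+$: $$\tilde\Delta(t\cdot s)=\tilde\Delta(t)\cdot\tilde\Delta(s)+(|\otimes t)\cdot\tilde\Delta(s)+\tilde\Delta(t)\cdot(|\otimes s),$$ $$\tilde\Delta(t\prec s)=s\otimes t+(|\otimes t)\prec\tilde\Delta(s)+\tilde\Delta(t)\prec(|\otimes s)+\tilde\Delta(t)*(s\otimes|)+\tilde\Delta(t)\prec\tilde\Delta(s),$$ $$\tilde\Delta(t\succ s)=t\otimes s+(|\otimes t)\succ\tilde\Delta(s)+(t\otimes|)*\tilde\Delta(s)+\tilde\Delta(t)\succ(|\otimes s)+\tilde\Delta(t)\succ\tilde\Delta(s),$$ where the products $\prec,\cdot,\succ$ of tensors are those of $\mathcal{A}\overline{\otimes}\mathcal{A}$ and $(a\otimes b)*(c\otimes d)=(a*c)\otimes(b*d)$.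
   Context: A tridendriform algebra over a field $\mathbb{K}$ is a vector space with products $\prec,\cdot,\succ$ such that, with $a*b=a\prec b+a\cdot b+a\succ b$: $(a\prec b)\prec c=a\prec(b*c)$, $(a\succ b)\prec c=a\succ(b\prec c)$, $(a*b)\succ c=a\succ(b\succ c)$, $(a\succ b)\cdot c=a\succ(b\cdot c)$, $(a\prec b)\cdot c=a\cdot(b\succ c)$, $(a\cdot b)\prec c=a\cdot(b\prec c)$, $(a\cdot b)\cdot c=a\cdot(b\cdot c)$. Trees: planar rooted trees in which every internal vertex has at least two children; the root vertex hangs from a trunk edge; leaves are the edges without upper vertex. $|$ is the tree with no internal vertex (one leaf). $T_n$ is the set of such trees with $n+1$ leaves, $\mathcal{A}=\bigoplus_{n\ge0}\mathbb{K}T_n$, $\mathcal{A}^+=\bigoplus_{n\ge1}\mathbb{K}T_n$. For trees $x_0,\dots,x_k$ ($k\ge1$), $x_0\vee\cdots\vee x_k$ is obtained by grafting them from left to right on a new root vertex; every tree $x\neq|$ is uniquely $x=x^{(0)}\vee\cdots\vee x^{(k)}$. $Y=|\vee|$. For trees $x=x^{(0)}\vee\cdots\vee x^{(k)}$, $y=y^{(0)}\vee\cdots\vee y^{(l)}$ in $\mathcal A^+$, recursively on the number of leaves: $x\prec y=x^{(0)}\vee\cdots\vee x^{(k-1)}\vee(x^{(k)}*y)$, $x\cdot y=x^{(0)}\vee\cdots\vee x^{(k-1)}\vee(x^{(k)}*y^{(0)})\vee y^{(1)}\vee\cdots\vee y^{(l)}$, $x\succ y=(x*y^{(0)})\vee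 y^{(1)}\vee\cdots\vee y^{(l)}$, where $*=\prec+\cdot+\succ$ and $|*z=z*|=z$. Then $\mathcal{A}^+$ is the free tridendriform algebra generated by $Y$ (Loday–Ronco), and $\mathcal A=\mathbb K|\oplus\mathcal A^+$ is its augmentation: $|$ is the unit of $*$ and for $a\in\mathcal A^+$: $|\prec a=0$, $a\prec|=a$, $|\succ a=a$, $a\succ|=0$, $|\cdot a=a\cdot|=0$. $\mathcal A\overline{\otimes}\mathcal A:=(\mathcal A^+\otimes\mathcal A^+)\oplus(\mathbb K|\otimes\mathcal A^+)\oplus(\mathcal A^+\otimes\mathbb K|)$, with products for $\ltimes\in\{\prec,\cdot,\succ\}$: $(a\otimes|)\ltimes(c\otimes|)=(a\ltimes c)\otimes|$ for $a,c\in\mathcal A^+$, and $(a\otimes b)\ltimes(c\otimes d)=(a*c)\otimes(b\ltimes d)$ when $b,d$ are not both $|$ (augmented conventions); it is a tridendriform algebra. *)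

theory Defs
  imports Main "HOL-Library.Poly_Mapping"
begin

text \<open>Leaf is the tree with no internal vertex (written | in the paper);
  Node [x0,...,xk] is x0 \<or> ... \<or> xk (grafting on a new root).\<close>
datatype tree = Leaf | Node "tree list"

fun reduced :: "tree \<Rightarrow> bool" where
  "reduced Leaf = True"
| "reduced (Node xs) = (2 \<le> length xs \<and> (\<forall>x\<in>set xs. reduced x))"

abbreviation Y :: tree where "Y \<equiv> Node [Leaf, Leaf]"

type_synonym 'k lc = "tree \<Rightarrow>\<^sub>0 'k"
type_synonym 'k tc = "(tree \<times> tree) \<Rightarrow>\<^sub>0 'k"

definition bil :: "('a \<Rightarrow> 'b \<Rightarrow> ('c \<Rightarrow>\<^sub>0 'k::field)) \<Rightarrow> ('a \<Rightarrow>\<^sub>0 'k) \<Rightarrow> ('b \<Rightarrow>\<^sub>0 'k) \<Rightarrow> ('c \<Rightarrow>\<^sub>0 'k)" where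
  "bil f p q = (\<Sum>u\<in>Poly_Mapping.keys p. \<Sum>v\<in>Poly_Mapping.keys q.
      Poly_Mapping.map (\<lambda>c. Poly_Mapping.lookup p u * Poly_Mapping.lookup q v * c) (f u v))"

definition scal :: "'k::field \<Rightarrow> ('a \<Rightarrow>\<^sub>0 'k) \<Rightarrow> ('a \<Rightarrow>\<^sub>0 'k)" where
  "scal k p = Poly_Mapping.map (\<lambda>c. k * c) p"

definition tens :: "'k::field lc \<Rightarrow> 'k lc \<Rightarrow> 'k tc" where
  "tens p q = (\<Sum>u\<in>Poly_Mapping.keys p. \<Sum>v\<in>Poly_Mapping.keys q. Poly_Mapping.single (u, v) (Poly_Mapping.lookup p u * Poly_Mapping.lookup q v))"

definition bar :: "'k::field lc" where "bar = Poly_Mapping.single Leaf 1"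

definition graft :: "tree list \<Rightarrow> 'k::field lc \<Rightarrow> tree list \<Rightarrow> 'k lc" where
  "graft pre c post = (\<Sum>u\<in>Poly_Mapping.keys c. Poly_Mapping.single (Node (pre @ [u] @ post)) (Poly_Mapping.lookup c u))"

datatype op = Prec | Dot | Succ | Star

function tri :: "op \<Rightarrow> tree \<Rightarrow> tree \<Rightarrow> 'k::field lc" where
  "tri Star Leaf v = Poly_Mapping.single v 1"
| "tri Star (Node xs) Leaf = Poly_Mapping.single (Node xs) 1"
| "tri Star (Node xs) (Node ys) =
     tri Prec (Node xs) (Node ys) + tri Dot (Node xs) (Node ys) + tri Succ (Node xs) (Node ys)"
| "tri Prec Leaf v = 0"
| "tri Prec (Node xs) Leaf = Poly_Mapping.single (Node xs) 1"
| "tri Prec (Node xs) (Node ys) =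
     (if xs = [] then 0 else graft (butlast xs) (tri Star (last xs) (Node ys)) [])"
| "tri Dot Leaf v = 0"
| "tri Dot (Node xs) Leaf = 0"
| "tri Dot (Node xs) (Node ys) =
     (if xs = [] \<or> ys = [] then 0
      else graft (butlast xs) (tri Star (last xs) (hd ys)) (tl ys))"
| "tri Succ Leaf v = Poly_Mapping.single v 1"
| "tri Succ (Node xs) Leaf = 0"
| "tri Succ (Node xs) (Node ys) =
     (if ys = [] then 0 else graft [] (tri Star (Node xs) (hd ys)) (tl ys))"
  by pat_completeness auto

lemma size_last_less: "xs \<noteq> [] \<Longrightarrow> size (last xs) < Suc (size_list size xs)"
  by (metis last_in_set less_Suc_eq_le size_list_estimation' order_refl)

lemma size_hd_less: "ys \<noteq> [] \<Longrightarrow> size (hd ys) < Suc (size_list size ys)"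
  by (metis hd_in_set less_Suc_eq_le size_list_estimation' order_refl)

lemma size_both_less: "xs \<noteq> [] \<Longrightarrow> ys \<noteq> [] \<Longrightarrow>
  size (last xs) + size (hd ys) < Suc (Suc (size_list size xs + size_list size ys))"
  using size_last_less[of xs] size_hd_less[of ys] by linarith

termination
  by (relation "measures [\<lambda>(r, u, v). size u + size v, \<lambda>(r, u, v). if r = Star then 1 else 0]")
     (auto simp: size_both_less size_last_less size_hd_less)

definition aop :: "op \<Rightarrow> 'k::field lc \<Rightarrow> 'k lc \<Rightarrow> 'k lc" where
  "aop r p q = bil (tri r) p q"

definition Aplus :: "'k::field lc \<Rightarrow> bool" where
  "Aplus p \<longleftrightarrow> (\<forall>u\<in>Poly_Mapping.keys p. reduced u \<and> u \<noteq> Leaf)"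

text \<open>Products of A \<otimes>bar A on basis tensors, for \<ltimes> in {Prec, Dot, Succ}:
  (a\<otimes>|) \<ltimes> (c\<otimes>|) = (a \<ltimes> c)\<otimes>|, and (a\<otimes>b) \<ltimes> (c\<otimes>d) = (a*c)\<otimes>(b \<ltimes> d) otherwise.
  For Star we use the componentwise product (a\<otimes>b)*(c\<otimes>d) = (a*c)\<otimes>(b*d).\<close>
definition tri2 :: "op \<Rightarrow> tree \<times> tree \<Rightarrow> tree \<times> tree \<Rightarrow> 'k::field tc" where
  "tri2 r x y = (case (x, y) of ((a, b), (c, d)) \<Rightarrow>
     if r = Star then tens (tri Star a c) (tri Star b d)
     else if b = Leaf \<and> d = Leaf then tens (tri r a c) bar
     else tens (tri Star a c) (tri r b d))"

definition tprod :: "op \<Rightarrow> 'k::field tc \<Rightarrow> 'k tc \<Rightarrow> 'k tc" where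
  "tprod r p q = bil (tri2 r) p q"

text \<open>A \<otimes>bar A: tensors with no |\<otimes>| component.\<close>
definition in_tbar :: "'k::field tc \<Rightarrow> bool" where
  "in_tbar p \<longleftrightarrow> (Leaf, Leaf) \<notin> Poly_Mapping.keys p"

definition is_Delta :: "('k::field lc \<Rightarrow> 'k tc) \<Rightarrow> bool" where
  "is_Delta D \<longleftrightarrow>
     (\<forall>p q. D (p + q) = D p + D q) \<and>
     (\<forall>k p. D (scal k p) = scal k (D p)) \<and>
     D bar = tens bar bar \<and>
     (\<forall>p. Aplus p \<longrightarrow> in_tbar (D p)) \<and>
     (\<forall>r\<in>{Prec, Dot, Succ}. \<forall>p q. Aplus p \<longrightarrow> Aplus q \<longrightarrow>
         D (aop r p q) = tprod r (D p) (D q)) \<and>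
     D (Poly_Mapping.single Y 1) =
       tens (Poly_Mapping.single Y 1) bar + tens bar (Poly_Mapping.single Y 1)"

definition Dtil :: "('k::field lc \<Rightarrow> 'k tc) \<Rightarrow> 'k lc \<Rightarrow> 'k tc" where
  "Dtil D x = D x - tens bar x - tens x bar"

end

theory Submission
  imports Defs
begin


lemma lookup_scal [simp]: "Poly_Mapping.lookup (scal k p) x = k * Poly_Mapping.lookup p x"
  unfolding scal_def by transfer (simp add: when_def)

lemma scal_add: "scal k (p + q) = scal k p + scal k q"
  by (rule poly_mapping_eqI) (simp add: lookup_add algebra_simps)
lemma scal_add_left: "scal (a + b) p = scal a p + scal b p"
  by (rule poly_mapping_eqI) (simp add: lookup_add algebra_simps)
lemma scal_scal: "scal a (scal b p) = scal (a * b) p"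
  by (rule poly_mapping_eqI) (simp add: algebra_simps)
lemma scal_zero [simp]: "scal 0 p = 0"
  by (rule poly_mapping_eqI) simp
lemma scal_zero2 [simp]: "scal k 0 = 0"
  by (rule poly_mapping_eqI) simp
lemma scal_one [simp]: "scal 1 p = p"
  by (rule poly_mapping_eqI) simp
lemma scal_sum: "scal k (sum f A) = (\<Sum>i\<in>A. scal k (f i))"
  by (rule poly_mapping_eqI) (simp add: lookup_sum sum_distrib_left)
lemma scal_single: "scal k (Poly_Mapping.single x c) = Poly_Mapping.single x (k * c)"
  unfolding scal_def by simp
lemma keys_scal: "Poly_Mapping.keys (scal k p) \<subseteq> Poly_Mapping.keys p"
  by (auto simp: in_keys_iff)

lemma bil_alt: "bil f p q = (\<Sum>u\<in>Poly_Mapping.keys p. \<Sum>v\<in>Poly_Mapping.keys q.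
      scal (Poly_Mapping.lookup p u * Poly_Mapping.lookup q v) (f u v))"
  unfolding bil_def scal_def by simp

lemma bil_superset:
  assumes "finite A" "Poly_Mapping.keys p \<subseteq> A" "finite B" "Poly_Mapping.keys q \<subseteq> B"
  shows "bil f p q = (\<Sum>u\<in>A. \<Sum>v\<in>B. scal (Poly_Mapping.lookup p u * Poly_Mapping.lookup q v) (f u v))"
proof -
  have "bil f p q = (\<Sum>u\<in>A. \<Sum>v\<in>Poly_Mapping.keys q.
      scal (Poly_Mapping.lookup p u * Poly_Mapping.lookup q v) (f u v))"
    unfolding bil_alt
    by (rule sum.mono_neutral_left) (use assms in \<open>auto simp: in_keys_iff\<close>)
  also have "\<dots> = (\<Sum>u\<in>A. \<Sum>v\<in>B. scal (Poly_Mapping.lookup p u * Poly_Mapping.lookup q v) (f u v))"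
    by (rule sum.cong[OF refl], rule sum.mono_neutral_left) (use assms in \<open>auto simp: in_keys_iff\<close>)
  finally show ?thesis .
qed

lemma bil_add1: "bil f (p + p') q = bil f p q + bil f p' q"
proof -
  let ?A = "Poly_Mapping.keys p \<union> Poly_Mapping.keys p'"
  let ?B = "Poly_Mapping.keys q"
  have "bil f (p + p') q = (\<Sum>u\<in>?A. \<Sum>v\<in>?B. scal (Poly_Mapping.lookup (p + p') u * Poly_Mapping.lookup q v) (f u v))"
    using keys_add[of p p'] keys_add[of q q'] by (intro bil_superset) auto
  moreover have "bil f p q = (\<Sum>u\<in>?A. \<Sum>v\<in>?B. scal (Poly_Mapping.lookup p u * Poly_Mapping.lookup q v) (f u v))"
    by (rule bil_superset) auto
  moreover have "bil f p' q = (\<Sum>u\<in>?A. \<Sum>v\<in>?B. scal (Poly_Mapping.lookup p' u * Poly_Mapping.lookup q v) (f u v))"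
    by (rule bil_superset) auto
  ultimately show ?thesis
    by (simp add: lookup_add distrib_right scal_add_left sum.distrib)
qed

lemma bil_add2: "bil f p (q + q') = bil f p q + bil f p q'"
proof -
  let ?A = "Poly_Mapping.keys p"
  let ?B = "Poly_Mapping.keys q \<union> Poly_Mapping.keys q'"
  have "bil f p (q + q') = (\<Sum>u\<in>?A. \<Sum>v\<in>?B. scal (Poly_Mapping.lookup p u * Poly_Mapping.lookup (q + q') v) (f u v))"
    using keys_add[of p p'] keys_add[of q q'] by (intro bil_superset) auto
  moreover have "bil f p q = (\<Sum>u\<in>?A. \<Sum>v\<in>?B. scal (Poly_Mapping.lookup p u * Poly_Mapping.lookup q v) (f u v))"
    by (rule bil_superset) auto
  moreover have "bil f p q' = (\<Sum>u\<in>?A. \<Sum>v\<in>?B. scal (Poly_Mapping.lookup p u * Poly_Mapping.lookup q' v) (f u v))"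
    by (rule bil_superset) auto
  ultimately show ?thesis
    by (simp add: lookup_add distrib_left scal_add_left sum.distrib)
qed

lemma bil_scal1: "bil f (scal k p) q = scal k (bil f p q)"
proof -
  have "bil f (scal k p) q = (\<Sum>u\<in>Poly_Mapping.keys p. \<Sum>v\<in>Poly_Mapping.keys q. scal (Poly_Mapping.lookup (scal k p) u * Poly_Mapping.lookup q v) (f u v))"
    by (rule bil_superset) (auto simp: keys_scal[THEN subsetD])
  then show ?thesis by (simp add: bil_alt scal_sum scal_scal mult.assoc)
qed

lemma bil_scal2: "bil f p (scal k q) = scal k (bil f p q)"
proof -
  have "bil f p (scal k q) = (\<Sum>u\<in>Poly_Mapping.keys p. \<Sum>v\<in>Poly_Mapping.keys q. scal (Poly_Mapping.lookup p u * Poly_Mapping.lookup (scal k q) v) (f u v))"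
    by (rule bil_superset) (auto simp: keys_scal[THEN subsetD])
  then show ?thesis by (simp add: bil_alt scal_sum scal_scal algebra_simps)
qed

lemma bil_zero1 [simp]: "bil f 0 q = 0" by (simp add: bil_def)
lemma bil_zero2 [simp]: "bil f p 0 = 0" by (simp add: bil_def)

lemma bil_sum1: "bil f (sum P I) q = (\<Sum>i\<in>I. bil f (P i) q)"
  by (induction I rule: infinite_finite_induct) (auto simp: bil_add1)
lemma bil_sum2: "bil f p (sum Q I) = (\<Sum>i\<in>I. bil f p (Q i))"
  by (induction I rule: infinite_finite_induct) (auto simp: bil_add2)

lemma bil_single: "bil f (Poly_Mapping.single x a) (Poly_Mapping.single y b) = scal (a * b) (f x y)"
  by (cases "a = 0"; cases "b = 0") (simp_all add: bil_alt)

lemma bil_cong: "(\<And>u v. u \<in> Poly_Mapping.keys p \<Longrightarrow> v \<in> Poly_Mapping.keys q \<Longrightarrow> f u v = g u v)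
   \<Longrightarrow> bil f p q = bil g p q"
  unfolding bil_alt by (intro sum.cong refl) auto

lemma bil_zero_fun: "(\<And>u v. u \<in> Poly_Mapping.keys p \<Longrightarrow> v \<in> Poly_Mapping.keys q \<Longrightarrow> f u v = 0)
   \<Longrightarrow> bil f p q = 0"
  unfolding bil_alt by (simp)

lemma expand: "p = (\<Sum>u\<in>Poly_Mapping.keys p. Poly_Mapping.single u (Poly_Mapping.lookup p u))"
proof (rule poly_mapping_eqI)
  fix x
  show "Poly_Mapping.lookup p x = Poly_Mapping.lookup (\<Sum>u\<in>Poly_Mapping.keys p. Poly_Mapping.single u (Poly_Mapping.lookup p u)) x"
    by (simp add: lookup_sum lookup_single when_def in_keys_iff)
qed

lemma keys_bil: "Poly_Mapping.keys (bil f p q) \<subseteq>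
   (\<Union>u\<in>Poly_Mapping.keys p. \<Union>v\<in>Poly_Mapping.keys q. Poly_Mapping.keys (f u v))"
proof -
  have "Poly_Mapping.keys (bil f p q) \<subseteq> (\<Union>u\<in>Poly_Mapping.keys p. Poly_Mapping.keys (\<Sum>v\<in>Poly_Mapping.keys q.
      scal (Poly_Mapping.lookup p u * Poly_Mapping.lookup q v) (f u v)))"
    unfolding bil_alt by (rule keys_sum)
  also have "\<dots> \<subseteq> (\<Union>u\<in>Poly_Mapping.keys p. \<Union>v\<in>Poly_Mapping.keys q. Poly_Mapping.keys (
      scal (Poly_Mapping.lookup p u * Poly_Mapping.lookup q v) (f u v)))"
    by (intro UN_mono subset_refl keys_sum)
  also have "\<dots> \<subseteq> (\<Union>u\<in>Poly_Mapping.keys p. \<Union>v\<in>Poly_Mapping.keys q. Poly_Mapping.keys (f u v))"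
    by (intro UN_mono subset_refl keys_scal)
  finally show ?thesis .
qed

lemma tens_bil: "tens p q = bil (\<lambda>u v. Poly_Mapping.single (u, v) 1) p q"
  unfolding tens_def bil_alt by (simp add: scal_single)

lemma tens_add1: "tens (p + p') q = tens p q + tens p' q" by (simp add: tens_bil bil_add1)
lemma tens_add2: "tens p (q + q') = tens p q + tens p q'" by (simp add: tens_bil bil_add2)
lemma tens_scal1: "tens (scal k p) q = scal k (tens p q)" by (simp add: tens_bil bil_scal1)
lemma tens_scal2: "tens p (scal k q) = scal k (tens p q)" by (simp add: tens_bil bil_scal2)
lemma tens_zero1 [simp]: "tens 0 q = 0" by (simp add: tens_bil)
lemma tens_zero2 [simp]: "tens p 0 = 0" by (simp add: tens_bil)
lemma tens_sum1: "tens (sum P I) q = (\<Sum>i\<in>I. tens (P i) q)" by (simp add: tens_bil bil_sum1)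
lemma tens_sum2: "tens p (sum Q I) = (\<Sum>i\<in>I. tens p (Q i))" by (simp add: tens_bil bil_sum2)

lemma keys_tens: "Poly_Mapping.keys (tens p q) \<subseteq> Poly_Mapping.keys p \<times> Poly_Mapping.keys q"
  using keys_bil[of "\<lambda>u v. Poly_Mapping.single (u, v) 1" p q] unfolding tens_bil by auto

lemma tens_expand: "tens p q = (\<Sum>u\<in>Poly_Mapping.keys p. \<Sum>v\<in>Poly_Mapping.keys q.
    Poly_Mapping.single (u, v) (Poly_Mapping.lookup p u * Poly_Mapping.lookup q v))"
  by (simp add: tens_def)

lemma bil_tens:
  assumes "\<And>u v u' v'. u \<in> Poly_Mapping.keys p \<Longrightarrow> v \<in> Poly_Mapping.keys q \<Longrightarrow>
     u' \<in> Poly_Mapping.keys p' \<Longrightarrow> v' \<in> Poly_Mapping.keys q' \<Longrightarrow>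
     f (u, v) (u', v') = tens (g u u') (h v v')"
  shows "bil f (tens p q) (tens p' q') = tens (bil g p p') (bil h q q')"
proof -
  let ?Kp = "Poly_Mapping.keys p" and ?Kq = "Poly_Mapping.keys q"
  let ?Kp' = "Poly_Mapping.keys p'" and ?Kq' = "Poly_Mapping.keys q'"
  let ?lp = "Poly_Mapping.lookup p" and ?lq = "Poly_Mapping.lookup q"
  let ?lp' = "Poly_Mapping.lookup p'" and ?lq' = "Poly_Mapping.lookup q'"
  have L: "bil f (tens p q) (tens p' q') = (\<Sum>u\<in>?Kp. \<Sum>v\<in>?Kq. \<Sum>u'\<in>?Kp'. \<Sum>v'\<in>?Kq'.
      scal (?lp u * ?lq v * (?lp' u' * ?lq' v')) (f (u, v) (u', v')))"
    apply (subst (1) tens_expand[of p q])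
    apply (subst (1) tens_expand[of p' q'])
    apply (subst bil_sum1)
    apply (subst bil_sum1)
    apply (subst bil_sum2)
    apply (subst bil_sum2)
    apply (subst bil_single)
    apply (rule refl)
    done
  have R: "tens (bil g p p') (bil h q q') = (\<Sum>u\<in>?Kp. \<Sum>u'\<in>?Kp'. \<Sum>v\<in>?Kq. \<Sum>v'\<in>?Kq'.
      scal (?lp u * ?lp' u') (scal (?lq v * ?lq' v') (tens (g u u') (h v v'))))"
    by (simp only: bil_alt tens_sum1 tens_scal1, simp only: tens_sum2 tens_scal2 scal_sum)
  have "(\<Sum>u\<in>?Kp. \<Sum>v\<in>?Kq. \<Sum>u'\<in>?Kp'. \<Sum>v'\<in>?Kq'.
      scal (?lp u * ?lq v * (?lp' u' * ?lq' v')) (f (u, v) (u', v')))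
     = (\<Sum>u\<in>?Kp. \<Sum>v\<in>?Kq. \<Sum>u'\<in>?Kp'. \<Sum>v'\<in>?Kq'.
      scal (?lp u * ?lp' u') (scal (?lq v * ?lq' v') (tens (g u u') (h v v'))))"
    apply (intro sum.cong refl)
    apply (simp only: assms scal_scal)
    apply (simp only: ac_simps)
    done
  also have "\<dots> = (\<Sum>u\<in>?Kp. \<Sum>u'\<in>?Kp'. \<Sum>v\<in>?Kq. \<Sum>v'\<in>?Kq'.
      scal (?lp u * ?lp' u') (scal (?lq v * ?lq' v') (tens (g u u') (h v v'))))"
    by (rule sum.cong[OF refl], rule sum.swap)
  finally have C: "(\<Sum>u\<in>?Kp. \<Sum>v\<in>?Kq. \<Sum>u'\<in>?Kp'. \<Sum>v'\<in>?Kq'.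
      scal (?lp u * ?lq v * (?lp' u' * ?lq' v')) (f (u, v) (u', v'))) = (\<Sum>u\<in>?Kp. \<Sum>u'\<in>?Kp'. \<Sum>v\<in>?Kq. \<Sum>v'\<in>?Kq'.
      scal (?lp u * ?lp' u') (scal (?lq v * ?lq' v') (tens (g u u') (h v v'))))" .
  show ?thesis by (simp only: L R C)
qed



lemma tri_Star_Leaf2 [simp]: "tri Star x Leaf = Poly_Mapping.single x 1"
  by (cases x) simp_all
lemma tri_Prec_Leaf2: "x \<noteq> Leaf \<Longrightarrow> tri Prec x Leaf = Poly_Mapping.single x 1"
  by (cases x) simp_all
lemma tri_Dot_Leaf2 [simp]: "tri Dot x Leaf = 0"
  by (cases x) simp_all
lemma tri_Succ_Leaf2: "x \<noteq> Leaf \<Longrightarrow> tri Succ x Leaf = 0"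
  by (cases x) simp_all

lemma keys_bar [simp]: "Poly_Mapping.keys (bar :: 'k::field lc) = {Leaf}"
  by (simp add: bar_def)
lemma lookup_bar_Leaf [simp]: "Poly_Mapping.lookup (bar :: 'k::field lc) Leaf = 1"
  by (simp add: bar_def)

lemma bil_bar_right: "bil f p bar = (\<Sum>u\<in>Poly_Mapping.keys p. scal (Poly_Mapping.lookup p u) (f u Leaf))"
  by (simp add: bil_alt)
lemma bil_bar_left: "bil f bar q = (\<Sum>v\<in>Poly_Mapping.keys q. scal (Poly_Mapping.lookup q v) (f Leaf v))"
  by (simp add: bil_alt)

lemma Aplus_keys: "Aplus x \<Longrightarrow> u \<in> Poly_Mapping.keys x \<Longrightarrow> u \<noteq> Leaf"
  by (simp add: Aplus_def)

lemma sum_single_expand: "(\<Sum>u\<in>Poly_Mapping.keys p. scal (Poly_Mapping.lookup p u) (Poly_Mapping.single u 1)) = p"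
  by (subst (3) expand) (simp add: scal_single)

lemma aop_Star_bar_right [simp]: "aop Star x bar = x"
  by (simp add: aop_def bil_bar_right sum_single_expand)
lemma aop_Star_bar_left [simp]: "aop Star bar y = y"
  by (simp add: aop_def bil_bar_left sum_single_expand)
lemma aop_Succ_bar_left [simp]: "aop Succ bar y = y"
  by (simp add: aop_def bil_bar_left sum_single_expand)
lemma aop_Prec_bar_left [simp]: "aop Prec bar y = 0"
  by (simp add: aop_def bil_bar_left)
lemma aop_Dot_bar_left [simp]: "aop Dot bar y = 0"
  by (simp add: aop_def bil_bar_left)
lemma aop_Dot_bar_right [simp]: "aop Dot x bar = 0"
  by (simp add: aop_def bil_bar_right)
lemma aop_Prec_bar_right: "Aplus x \<Longrightarrow> aop Prec x bar = x"
  unfolding aop_def bil_bar_right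
  by (subst (2) sum_single_expand[symmetric], rule sum.cong, auto simp: tri_Prec_Leaf2 Aplus_keys)
lemma aop_Succ_bar_right: "Aplus x \<Longrightarrow> aop Succ x bar = 0"
  unfolding aop_def bil_bar_right
  by (rule sum.neutral) (auto simp: tri_Succ_Leaf2 Aplus_keys)

lemma nl_graft: "Leaf \<notin> Poly_Mapping.keys (graft pre c post)"
proof -
  have "Poly_Mapping.keys (graft pre c post) \<subseteq> (\<Union>u\<in>Poly_Mapping.keys c.
     Poly_Mapping.keys (Poly_Mapping.single (Node (pre @ [u] @ post)) (Poly_Mapping.lookup c u)))"
    unfolding graft_def by (rule keys_sum)
  then show ?thesis by (auto split: if_splits)
qed

lemma nl_tri: assumes that: "u \<noteq> Leaf \<or> v \<noteq> Leaf" shows "Leaf \<notin> Poly_Mapping.keys (tri r u v)"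
proof (cases u)
  case Leaf
  then show ?thesis using that by (cases r) auto
next
  case (Node xs)
  note nn = this
  show ?thesis
  proof (cases v)
    case Leaf
    then show ?thesis using nn by (cases r) auto
  next
    case (Node ys)
    have p: "Leaf \<notin> Poly_Mapping.keys (tri Prec u v)" "Leaf \<notin> Poly_Mapping.keys (tri Dot u v)"
      "Leaf \<notin> Poly_Mapping.keys (tri Succ u v)"
      using nn Node by (auto simp: nl_graft)
    have st: "tri Star u v = tri Prec u v + tri Dot u v + tri Succ u v" using nn Node by simp
    have "Leaf \<notin> Poly_Mapping.keys (tri Star u v)"
      unfolding st using p keys_add[of "tri Prec u v + tri Dot u v" "tri Succ u v"]
        keys_add[of "tri Prec u v" "tri Dot u v"] by blast
    then show ?thesis using p by (cases r) auto
  qed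
qed

definition bothNL :: "'k::field tc \<Rightarrow> bool" where
  "bothNL T \<longleftrightarrow> (\<forall>x\<in>Poly_Mapping.keys T. fst x \<noteq> Leaf \<and> snd x \<noteq> Leaf)"

lemma bothNL_zero [simp]: "bothNL 0" by (simp add: bothNL_def)
lemma bothNL_add: "bothNL P \<Longrightarrow> bothNL Q \<Longrightarrow> bothNL (P + Q)"
  unfolding bothNL_def using keys_add[of P Q] by blast
lemma bothNL_scal: "bothNL P \<Longrightarrow> bothNL (scal k P)"
  unfolding bothNL_def using keys_scal[of k P] by blast
lemma bothNL_minus: "bothNL P \<Longrightarrow> bothNL (- P)"
  unfolding bothNL_def by simp
lemma bothNL_sum: "(\<And>i. i \<in> I \<Longrightarrow> bothNL (P i)) \<Longrightarrow> bothNL (sum P I)"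
  by (induction I rule: infinite_finite_induct) (auto intro: bothNL_add)
lemma bothNL_bil: "(\<And>x y. x \<in> Poly_Mapping.keys P \<Longrightarrow> y \<in> Poly_Mapping.keys Q \<Longrightarrow> bothNL (f x y))
   \<Longrightarrow> bothNL (bil f P Q)"
  unfolding bil_alt by (intro bothNL_sum bothNL_scal) auto
lemma bothNL_tens_gen: assumes that: "Leaf \<notin> Poly_Mapping.keys p" "Leaf \<notin> Poly_Mapping.keys q" shows "bothNL (tens p q)"
  unfolding bothNL_def
proof (intro ballI)
  fix z assume z: "z \<in> Poly_Mapping.keys (tens p q)"
  have "z \<in> Poly_Mapping.keys p \<times> Poly_Mapping.keys q" by (rule subsetD[OF keys_tens z])
  then have "fst z \<in> Poly_Mapping.keys p" "snd z \<in> Poly_Mapping.keys q" by (auto simp: mem_Times_iff)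
  then show "fst z \<noteq> Leaf \<and> snd z \<noteq> Leaf" using that by auto
qed
lemma bothNL_tens: "Aplus x \<Longrightarrow> Aplus y \<Longrightarrow> bothNL (tens x y)"
  by (rule bothNL_tens_gen) (auto simp: Aplus_def)

lemma bothNL_tri2: assumes that: "a \<noteq> Leaf \<or> c \<noteq> Leaf" "b \<noteq> Leaf \<or> d \<noteq> Leaf" shows "bothNL (tri2 r (a, b) (c, d))"
proof -
  have e: "tri2 r (a,b) (c,d) = (if r = Star then tens (tri Star a c) (tri Star b d)
     else if b = Leaf \<and> d = Leaf then tens (tri r a c) bar else tens (tri Star a c) (tri r b d))"
    by (simp add: tri2_def)
  show ?thesis
  proof (cases "r = Star")
    case True
    then show ?thesis unfolding e using that by (simp add: bothNL_tens_gen nl_tri)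
  next
    case False
    have nb: "\<not> (b = Leaf \<and> d = Leaf)" using that by auto
    show ?thesis unfolding e if_not_P[OF False] if_not_P[OF nb]
      by (rule bothNL_tens_gen; rule nl_tri) (use that in auto)
  qed
qed

lemma keys_tens_bar: "z \<in> Poly_Mapping.keys (tens x bar) \<Longrightarrow> snd z = Leaf \<and> fst z \<in> Poly_Mapping.keys x"
  using subsetD[OF keys_tens[of x bar]] by (simp add: mem_Times_iff)
lemma keys_bar_tens: "z \<in> Poly_Mapping.keys (tens bar x) \<Longrightarrow> fst z = Leaf \<and> snd z \<in> Poly_Mapping.keys x"
  using subsetD[OF keys_tens[of bar x]] by (simp add: mem_Times_iff)

lemma bothNL_keys: "bothNL T \<Longrightarrow> z \<in> Poly_Mapping.keys T \<Longrightarrow> fst z \<noteq> Leaf \<and> snd z \<noteq> Leaf"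
  by (simp add: bothNL_def)



lemma bar_eq: "(bar :: 'k::field lc) = Poly_Mapping.single Leaf 1" by (simp add: bar_def)

lemma aop_bar_bar [simp]: "aop Star bar bar = bar" by simp

lemma tp_bb:
  assumes "r \<noteq> Star" "Aplus x" "Aplus y"
  shows "tprod r (tens bar x) (tens bar y) = tens bar (aop r x y)"
proof -
  have "bil (tri2 r) (tens bar x) (tens bar y) = tens (bil (tri Star) bar bar) (bil (tri r) x y)"
    by (rule bil_tens) (use assms in \<open>auto simp: tri2_def Aplus_keys\<close>)
  then show ?thesis by (simp add: tprod_def aop_def[symmetric])
qed

lemma tp_cc:
  assumes "r \<noteq> Star"
  shows "tprod r (tens x bar) (tens y bar) = tens (aop r x y) bar"
proof -
  have "bil (tri2 r) (tens x bar) (tens y bar) = tens (bil (tri r) x y) (bil (tri Star) bar bar)"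
    by (rule bil_tens) (use assms in \<open>auto simp: tri2_def bar_eq\<close>)
  then show ?thesis by (simp add: tprod_def aop_def[symmetric])
qed

lemma tp_bc:
  assumes "r \<noteq> Star" "Aplus x"
  shows "tprod r (tens bar x) (tens y bar) = tens y (aop r x bar)"
proof -
  have "bil (tri2 r) (tens bar x) (tens y bar) = tens (bil (tri Star) bar y) (bil (tri r) x bar)"
    by (rule bil_tens) (use assms in \<open>auto simp: tri2_def Aplus_keys\<close>)
  then show ?thesis by (simp add: tprod_def aop_def[symmetric])
qed

lemma tp_cb:
  assumes "r \<noteq> Star" "Aplus y"
  shows "tprod r (tens x bar) (tens bar y) = tens x (aop r bar y)"
proof -
  have "bil (tri2 r) (tens x bar) (tens bar y) = tens (bil (tri Star) x bar) (bil (tri r) bar y)"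
    by (rule bil_tens) (use assms in \<open>auto simp: tri2_def Aplus_keys\<close>)
  then show ?thesis by (simp add: tprod_def aop_def[symmetric])
qed

lemma keys_tens_bar': assumes "z \<in> Poly_Mapping.keys (tens x bar)"
  obtains u where "z = (u, Leaf)" "u \<in> Poly_Mapping.keys x"
  using keys_tens_bar[OF assms] by (cases z) auto

lemma keys_bothNL': assumes "bothNL T" "w \<in> Poly_Mapping.keys T"
  obtains a b where "w = (a, b)" "a \<noteq> Leaf" "b \<noteq> Leaf"
  using bothNL_keys[OF assms] by (cases w) auto

lemma tp_cA_zero:
  assumes "bothNL T" "r \<in> {Prec, Dot}"
  shows "tprod r (tens x bar) T = 0"
  unfolding tprod_def
proof (rule bil_zero_fun)
  fix z w assume z: "z \<in> Poly_Mapping.keys (tens x bar)" and w: "w \<in> Poly_Mapping.keys T"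
  obtain u where u: "z = (u, Leaf)" using keys_tens_bar'[OF z] by blast
  obtain a b where ab: "w = (a, b)" "b \<noteq> Leaf" using keys_bothNL'[OF assms(1) w] by blast
  show "tri2 r z w = 0" using assms(2) ab(2) unfolding u ab by (auto simp: tri2_def)
qed

lemma tp_cA_Succ:
  assumes "bothNL T"
  shows "tprod Succ (tens x bar) T = tprod Star (tens x bar) T"
  unfolding tprod_def
proof (rule bil_cong)
  fix z w assume z: "z \<in> Poly_Mapping.keys (tens x bar)" and w: "w \<in> Poly_Mapping.keys T"
  obtain u where u: "z = (u, Leaf)" using keys_tens_bar'[OF z] by blast
  obtain a b where ab: "w = (a, b)" "b \<noteq> Leaf" using keys_bothNL'[OF assms(1) w] by blast
  show "tri2 Succ z w = tri2 Star z w" unfolding u ab using ab(2) by (simp add: tri2_def)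
qed

lemma tp_Ac_zero:
  assumes "bothNL T" "r \<in> {Dot, Succ}"
  shows "tprod r T (tens y bar) = 0"
  unfolding tprod_def
proof (rule bil_zero_fun)
  fix w z assume w: "w \<in> Poly_Mapping.keys T" and z: "z \<in> Poly_Mapping.keys (tens y bar)"
  obtain u where u: "z = (u, Leaf)" using keys_tens_bar'[OF z] by blast
  obtain a b where ab: "w = (a, b)" "b \<noteq> Leaf" using keys_bothNL'[OF assms(1) w] by blast
  show "tri2 r w z = 0" using assms(2) ab(2) unfolding u ab by (auto simp: tri2_def tri_Succ_Leaf2)
qed

lemma tp_Ac_Prec:
  assumes "bothNL T"
  shows "tprod Prec T (tens y bar) = tprod Star T (tens y bar)"
  unfolding tprod_def
proof (rule bil_cong)
  fix w z assume w: "w \<in> Poly_Mapping.keys T" and z: "z \<in> Poly_Mapping.keys (tens y bar)"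
  obtain u where u: "z = (u, Leaf)" using keys_tens_bar'[OF z] by blast
  obtain a b where ab: "w = (a, b)" "b \<noteq> Leaf" using keys_bothNL'[OF assms(1) w] by blast
  show "tri2 Prec w z = tri2 Star w z" unfolding u ab using ab(2) by (simp add: tri2_def tri_Prec_Leaf2)
qed

lemma tprod_expand9:
  "tprod r (A + B + C) (A' + B' + C') =
     tprod r A A' + tprod r A B' + tprod r A C' + tprod r B A' + tprod r B B' + tprod r B C'
     + tprod r C A' + tprod r C B' + tprod r C C'"
  by (simp only: tprod_def bil_add1 bil_add2 add_ac)



lemma scal_diff: "scal k (P - Q) = scal k P - scal k Q"
  by (rule poly_mapping_eqI) (simp add: lookup_minus algebra_simps)

context
  fixes D :: "'k::field lc \<Rightarrow> 'k tc"
  assumes D: "is_Delta D"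
begin

lemma D_add: "D (p + q) = D p + D q" using D by (simp add: is_Delta_def)
lemma D_scal: "D (scal k p) = scal k (D p)" using D by (simp add: is_Delta_def)
lemma D_zero: "D 0 = 0"
proof -
  have "D (0 + 0) = D 0 + D 0" by (rule D_add)
  then show ?thesis by simp
qed
lemma D_hom: "r \<in> {Prec, Dot, Succ} \<Longrightarrow> Aplus p \<Longrightarrow> Aplus q \<Longrightarrow> D (aop r p q) = tprod r (D p) (D q)"
  using D by (auto simp: is_Delta_def)
lemma D_Y: "D (Poly_Mapping.single Y 1) = tens (Poly_Mapping.single Y 1) bar + tens bar (Poly_Mapping.single Y 1)"
  using D by (simp add: is_Delta_def)

lemma Dtil_add: "Dtil D (p + q) = Dtil D p + Dtil D q"
  by (simp add: Dtil_def D_add tens_add1 tens_add2 algebra_simps)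
lemma Dtil_scal: "Dtil D (scal k p) = scal k (Dtil D p)"
  by (simp add: Dtil_def D_scal tens_scal1 tens_scal2 scal_diff)
lemma Dtil_zero: "Dtil D 0 = 0"
  by (simp add: Dtil_def D_zero)
lemma Dtil_sum: "Dtil D (sum P I) = (\<Sum>i\<in>I. Dtil D (P i))"
  by (induction I rule: infinite_finite_induct) (auto simp: Dtil_add Dtil_zero)

lemma D9:
  assumes "r \<in> {Prec, Dot, Succ}" "Aplus x" "Aplus y"
  shows "D (aop r x y) =
     tprod r (Dtil D x) (Dtil D y) + tprod r (Dtil D x) (tens bar y) + tprod r (Dtil D x) (tens y bar)
     + tprod r (tens bar x) (Dtil D y) + tprod r (tens bar x) (tens bar y) + tprod r (tens bar x) (tens y bar)
     + tprod r (tens x bar) (Dtil D y) + tprod r (tens x bar) (tens bar y) + tprod r (tens x bar) (tens y bar)"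
proof -
  have Dx: "D x = Dtil D x + tens bar x + tens x bar" by (simp add: Dtil_def)
  have Dy: "D y = Dtil D y + tens bar y + tens y bar" by (simp add: Dtil_def)
  have "D (aop r x y) = tprod r (Dtil D x + tens bar x + tens x bar) (Dtil D y + tens bar y + tens y bar)"
    by (simp only: D_hom[OF assms] Dx[symmetric] Dy[symmetric])
  then show ?thesis by (simp only: tprod_expand9)
qed

lemma formulas:
  assumes x: "Aplus x" and y: "Aplus y" and nx: "bothNL (Dtil D x)" and ny: "bothNL (Dtil D y)"
  shows "Dtil D (aop Dot x y) =
           tprod Dot (Dtil D x) (Dtil D y) + tprod Dot (tens bar x) (Dtil D y)
           + tprod Dot (Dtil D x) (tens bar y)
     \<and> Dtil D (aop Prec x y) =
           tens y x + tprod Prec (tens bar x) (Dtil D y) + tprod Prec (Dtil D x) (tens bar y)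
           + tprod Star (Dtil D x) (tens y bar) + tprod Prec (Dtil D x) (Dtil D y)
     \<and> Dtil D (aop Succ x y) =
           tens x y + tprod Succ (tens bar x) (Dtil D y) + tprod Star (tens x bar) (Dtil D y)
           + tprod Succ (Dtil D x) (tens bar y) + tprod Succ (Dtil D x) (Dtil D y)"
proof (intro conjI)
  show "Dtil D (aop Dot x y) =
           tprod Dot (Dtil D x) (Dtil D y) + tprod Dot (tens bar x) (Dtil D y)
           + tprod Dot (Dtil D x) (tens bar y)"
    unfolding Dtil_def[of D "aop Dot x y"] D9[of Dot, OF _ x y, simplified]
    using x y nx ny
    by (simp add: tp_bb tp_cc tp_bc tp_cb tp_cA_zero tp_Ac_zero algebra_simps)
  show "Dtil D (aop Prec x y) =
           tens y x + tprod Prec (tens bar x) (Dtil D y) + tprod Prec (Dtil D x) (tens bar y)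
           + tprod Star (Dtil D x) (tens y bar) + tprod Prec (Dtil D x) (Dtil D y)"
    unfolding Dtil_def[of D "aop Prec x y"] D9[of Prec, OF _ x y, simplified]
    using x y nx ny
    by (simp add: tp_bb tp_cc tp_bc tp_cb tp_cA_zero tp_Ac_Prec aop_Prec_bar_right algebra_simps)
  show "Dtil D (aop Succ x y) =
           tens x y + tprod Succ (tens bar x) (Dtil D y) + tprod Star (tens x bar) (Dtil D y)
           + tprod Succ (Dtil D x) (tens bar y) + tprod Succ (Dtil D x) (Dtil D y)"
    unfolding Dtil_def[of D "aop Succ x y"] D9[of Succ, OF _ x y, simplified]
    using x y nx ny
    by (simp add: tp_bb tp_cc tp_bc tp_cb tp_cA_Succ tp_Ac_zero aop_Succ_bar_right algebra_simps)
qed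

end



lemma bothNL_tprod_gen:
  assumes "\<And>z w. z \<in> Poly_Mapping.keys P \<Longrightarrow> w \<in> Poly_Mapping.keys Q \<Longrightarrow>
     (fst z \<noteq> Leaf \<or> fst w \<noteq> Leaf) \<and> (snd z \<noteq> Leaf \<or> snd w \<noteq> Leaf)"
  shows "bothNL (tprod r P Q)"
  unfolding tprod_def
proof (rule bothNL_bil)
  fix z w assume z: "z \<in> Poly_Mapping.keys P" and w: "w \<in> Poly_Mapping.keys Q"
  obtain a b where ab: "z = (a, b)" by (cases z)
  obtain c d where cd: "w = (c, d)" by (cases w)
  show "bothNL (tri2 r z w)" unfolding ab cd
    by (rule bothNL_tri2) (use assms[OF z w] ab cd in auto)
qed

lemma keys_bar_tens_nl: "Aplus x \<Longrightarrow> z \<in> Poly_Mapping.keys (tens bar x) \<Longrightarrow> snd z \<noteq> Leaf"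
  using keys_bar_tens Aplus_keys by blast
lemma keys_tens_bar_nl: "Aplus x \<Longrightarrow> z \<in> Poly_Mapping.keys (tens x bar) \<Longrightarrow> fst z \<noteq> Leaf"
  using keys_tens_bar Aplus_keys by blast

lemma bNL_AA: "bothNL P \<Longrightarrow> bothNL Q \<Longrightarrow> bothNL (tprod r P Q)"
  by (rule bothNL_tprod_gen) (auto dest: bothNL_keys)
lemma bNL_BA: "Aplus x \<Longrightarrow> bothNL Q \<Longrightarrow> bothNL (tprod r (tens bar x) Q)"
  by (rule bothNL_tprod_gen) (auto dest: bothNL_keys keys_bar_tens_nl)
lemma bNL_CA: "Aplus x \<Longrightarrow> bothNL Q \<Longrightarrow> bothNL (tprod r (tens x bar) Q)"
  by (rule bothNL_tprod_gen) (auto dest: bothNL_keys keys_tens_bar_nl)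
lemma bNL_AB: "bothNL P \<Longrightarrow> Aplus y \<Longrightarrow> bothNL (tprod r P (tens bar y))"
  by (rule bothNL_tprod_gen) (auto dest: bothNL_keys keys_bar_tens_nl)
lemma bNL_AC: "bothNL P \<Longrightarrow> Aplus y \<Longrightarrow> bothNL (tprod r P (tens y bar))"
  by (rule bothNL_tprod_gen) (auto dest: bothNL_keys keys_tens_bar_nl)

lemma Aplus_single: "reduced u \<Longrightarrow> u \<noteq> Leaf \<Longrightarrow> Aplus (Poly_Mapping.single u (1::'k::field))"
  by (simp add: Aplus_def)

lemma aop_single: "aop r (Poly_Mapping.single x 1) (Poly_Mapping.single y 1) = (tri r x y :: 'k::field lc)"
  by (simp add: aop_def bil_single)

lemma graft_single: "graft pre (Poly_Mapping.single u (1::'k::field)) post = Poly_Mapping.single (Node (pre @ [u] @ post)) 1"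
  by (simp add: graft_def)

lemma size_list_ge: "length xs \<le> size_list f xs"
  by (induction xs) auto

context
  fixes D :: "'k::field lc \<Rightarrow> 'k tc"
  assumes D: "is_Delta D"
begin

lemma step:
  assumes "r \<in> {Prec, Dot, Succ}" "Aplus x" "Aplus y" "bothNL (Dtil D x)" "bothNL (Dtil D y)"
  shows "bothNL (Dtil D (aop r x y))"
proof -
  note f = formulas[OF D assms(2-5)]
  have "bothNL (Dtil D (aop Dot x y))"
    using f assms by (auto intro!: bothNL_add bNL_AA bNL_BA bNL_AB)
  moreover have "bothNL (Dtil D (aop Prec x y))"
    using f assms by (auto intro!: bothNL_add bNL_AA bNL_BA bNL_AB bNL_AC bothNL_tens)
  moreover have "bothNL (Dtil D (aop Succ x y))"
    using f assms by (auto intro!: bothNL_add bNL_AA bNL_BA bNL_AB bNL_CA bothNL_tens)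
  ultimately show ?thesis using assms(1) by auto
qed

lemma step_tree:
  assumes "r \<in> {Prec, Dot, Succ}" "reduced x" "x \<noteq> Leaf" "reduced y" "y \<noteq> Leaf"
    "bothNL (Dtil D (Poly_Mapping.single x 1))" "bothNL (Dtil D (Poly_Mapping.single y 1))"
  shows "bothNL (Dtil D (tri r x y))"
  using step[OF assms(1) Aplus_single[OF assms(2,3)] Aplus_single[OF assms(4,5)] assms(6,7)]
  by (simp add: aop_single)

lemma bothNL_Y: "bothNL (Dtil D (Poly_Mapping.single Y 1))"
  by (simp add: Dtil_def D_Y[OF D])

lemma tree_gen: "reduced u \<Longrightarrow> u \<noteq> Leaf \<Longrightarrow> bothNL (Dtil D (Poly_Mapping.single u 1))"
proof (induction u rule: measure_induct_rule[where f=size])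
  case (less u)
  obtain xs where u: "u = Node xs" using less.prems by (cases u) auto
  have len: "2 \<le> length xs" and red: "\<And>x. x \<in> set xs \<Longrightarrow> reduced x" using less.prems u by auto
  show ?case
  proof (cases "length xs = 2")
    case True
    then obtain x0 x1 where xs: "xs = [x0, x1]"
      by (metis (no_types, lifting) One_nat_def Suc_1 length_0_conv length_Suc_conv)
    have r0: "reduced x0" and r1: "reduced x1" using red xs by auto
    show ?thesis
    proof (cases x0)
      case Leaf0: Leaf
      show ?thesis
      proof (cases x1)
        case Leaf
        then show ?thesis using Leaf0 u xs bothNL_Y by simp
      next
        case (Node ys)
        have e: "tri Prec Y x1 = (Poly_Mapping.single u 1 :: 'k lc)"
          using Node Leaf0 u xs by (simp add: graft_single)
        have ih: "bothNL (Dtil D (Poly_Mapping.single x1 1))"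
          using less.IH[of x1] r1 Node u xs by simp
        show ?thesis
          using step_tree[of Prec Y x1] ih bothNL_Y r1 Node e by simp
      qed
    next
      case Node0: (Node zs)
      have ih0: "bothNL (Dtil D (Poly_Mapping.single x0 1))"
        using less.IH[of x0] r0 Node0 u xs by simp
      show ?thesis
      proof (cases x1)
        case Leaf
        have e: "tri Succ x0 Y = (Poly_Mapping.single u 1 :: 'k lc)"
          using Node0 Leaf u xs by (simp add: graft_single)
        show ?thesis
          using step_tree[of Succ x0 Y] ih0 bothNL_Y r0 Node0 e by simp
      next
        case (Node ys)
        have e: "tri Prec (Node [x0, Leaf]) x1 = (Poly_Mapping.single u 1 :: 'k lc)"
          using Node u xs by (simp add: graft_single)
        have ih1: "bothNL (Dtil D (Poly_Mapping.single x1 1))"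
          using less.IH[of x1] r1 Node u xs by simp
        have ihv: "bothNL (Dtil D (Poly_Mapping.single (Node [x0, Leaf]) 1))"
          using less.IH[of "Node [x0, Leaf]"] r0 Node Node0 u xs by simp
        show ?thesis
          using step_tree[of Prec "Node [x0, Leaf]" x1] ihv ih1 r0 r1 Node e by simp
      qed
    qed
  next
    case False
    then have len3: "3 \<le> length xs" using len by simp
    obtain ys xk where xs: "xs = ys @ [xk]"
      using len by (metis append_butlast_last_id list.size(3) not_numeral_le_zero)
    have lys: "2 \<le> length ys" using len3 xs by simp
    have rys: "reduced (Node ys)" using lys red xs by auto
    have rk: "reduced xk" using red xs by auto
    have rv: "reduced (Node [Leaf, xk])" using rk by simp
    have e: "tri Dot (Node ys) (Node [Leaf, xk]) = (Poly_Mapping.single u 1 :: 'k lc)"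
    proof -
      have ne: "ys \<noteq> []" using lys by auto
      have "tri Star (last ys) Leaf = (Poly_Mapping.single (last ys) 1 :: 'k lc)" by simp
      moreover have eq: "butlast ys @ [last ys, xk] = ys @ [xk]"
        using ne by (metis append_butlast_last_id append.assoc append_Cons append_Nil)
      ultimately have "tri Dot (Node ys) (Node [Leaf, xk]) = (Poly_Mapping.single (Node (butlast ys @ [last ys, xk])) 1 :: 'k lc)"
        using ne by (simp add: graft_single)
      then show ?thesis unfolding eq u xs .
    qed
    have sz: "size_list size ys \<ge> 2" using lys size_list_ge[of ys size] by simp
    have ih1: "bothNL (Dtil D (Poly_Mapping.single (Node ys) 1))"
      using less.IH[of "Node ys"] rys u xs by simp
    have ih2: "bothNL (Dtil D (Poly_Mapping.single (Node [Leaf, xk]) 1))"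
      using less.IH[of "Node [Leaf, xk]"] rv u xs sz by simp
    show ?thesis
      using step_tree[of Dot "Node ys" "Node [Leaf, xk]"] ih1 ih2 rys rv e by simp
  qed
qed

lemma Aplus_bothNL: "Aplus t \<Longrightarrow> bothNL (Dtil D t)"
proof -
  assume t: "Aplus t"
  have "Dtil D t = (\<Sum>u\<in>Poly_Mapping.keys t. scal (Poly_Mapping.lookup t u) (Dtil D (Poly_Mapping.single u 1)))"
    by (subst sum_single_expand[symmetric]) (simp add: Dtil_sum[OF D] Dtil_scal[OF D])
  also have "bothNL \<dots>"
    using t by (intro bothNL_sum bothNL_scal tree_gen) (auto simp: Aplus_def)
  finally show ?thesis .
qed

end

theorem mainTheorem5:
  fixes D :: "'k::field lc \<Rightarrow> 'k tc" and t s :: "'k lc"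
  assumes "is_Delta D" and "Aplus t" and "Aplus s"
  shows "Dtil D (aop Dot t s) =
           tprod Dot (Dtil D t) (Dtil D s) + tprod Dot (tens bar t) (Dtil D s)
           + tprod Dot (Dtil D t) (tens bar s)
     \<and> Dtil D (aop Prec t s) =
           tens s t + tprod Prec (tens bar t) (Dtil D s) + tprod Prec (Dtil D t) (tens bar s)
           + tprod Star (Dtil D t) (tens s bar) + tprod Prec (Dtil D t) (Dtil D s)
     \<and> Dtil D (aop Succ t s) =
           tens t s + tprod Succ (tens bar t) (Dtil D s) + tprod Star (tens t bar) (Dtil D s)
           + tprod Succ (Dtil D t) (tens bar s) + tprod Succ (Dtil D t) (Dtil D s)"
  using formulas[OF assms(1) assms(2,3) Aplus_bothNL[OF assms(1,2)] Aplus_bothNL[OF assms(1,3)]] .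

end
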